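(* Let $m$ be a positive integer and let $D$ be a quaternary near-extremal Hermitian self-dual code of length $6m$. Let $A_{2m}$ denote the number of codewords of weight $2m$ in $D$. Then $A_{2m}\equiv 0 \pmod 9$.
   Context: Let $\mathbb{F}_4=\{0,1,\omega,\omega^2\}$ with $\omega^2=\omega+1$. A quaternary code of length $n$ is a linear subspace of $\mathbb{F}_4^n$; with $\langle x,y\rangle_H=\sum_{k} x_k y_k^2$, the Hermitian dual is $D^{\perp_H}=\{x : \langle x,y\rangle_H=0\ \forall y\in D\}$ and $D$ is Hermitian self-dual if $D=D^{\perp_H}$. The weight of a vector is the number of its nonzero coordinates. A quaternary Hermitian self-dual code of length $n$ is near-extremal if its minimum (nonzero) weight equals $2\lfloor n/6\rfloor$; for length $6m$ this is $2m$. *)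

theory Defs
  imports Main
begin

text \<open>The field F_4 = {0, 1, w, w^2} with w^2 = w + 1 (characteristic 2).\<close>

datatype f4 = F0 | F1 | FW | FW2

fun f4_add :: "f4 \<Rightarrow> f4 \<Rightarrow> f4" where
  "f4_add F0 y = y"
| "f4_add x F0 = x"
| "f4_add F1 F1 = F0"
| "f4_add F1 FW = FW2"
| "f4_add F1 FW2 = FW"
| "f4_add FW F1 = FW2"
| "f4_add FW FW = F0"
| "f4_add FW FW2 = F1"
| "f4_add FW2 F1 = FW"
| "f4_add FW2 FW = F1"
| "f4_add FW2 FW2 = F0"

fun f4_mul :: "f4 \<Rightarrow> f4 \<Rightarrow> f4" where
  "f4_mul F0 y = F0"
| "f4_mul x F0 = F0"
| "f4_mul F1 y = y"
| "f4_mul x F1 = x"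
| "f4_mul FW FW = FW2"
| "f4_mul FW FW2 = F1"
| "f4_mul FW2 FW = F1"
| "f4_mul FW2 FW2 = FW"

definition f4_conj :: "f4 \<Rightarrow> f4" where
  "f4_conj x = f4_mul x x"

definition vecs :: "nat \<Rightarrow> (nat \<Rightarrow> f4) set" where
  "vecs n = {x. \<forall>k\<ge>n. x k = F0}"

definition vadd :: "(nat \<Rightarrow> f4) \<Rightarrow> (nat \<Rightarrow> f4) \<Rightarrow> nat \<Rightarrow> f4" where
  "vadd x y = (\<lambda>k. f4_add (x k) (y k))"

definition vscale :: "f4 \<Rightarrow> (nat \<Rightarrow> f4) \<Rightarrow> nat \<Rightarrow> f4" where
  "vscale a x = (\<lambda>k. f4_mul a (x k))"

definition linear_code :: "nat \<Rightarrow> (nat \<Rightarrow> f4) set \<Rightarrow> bool" where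
  "linear_code n D \<longleftrightarrow> D \<subseteq> vecs n \<and> (\<lambda>k. F0) \<in> D
     \<and> (\<forall>x\<in>D. \<forall>y\<in>D. vadd x y \<in> D) \<and> (\<forall>a. \<forall>x\<in>D. vscale a x \<in> D)"

definition herm :: "nat \<Rightarrow> (nat \<Rightarrow> f4) \<Rightarrow> (nat \<Rightarrow> f4) \<Rightarrow> f4" where
  "herm n x y = foldr (\<lambda>k acc. f4_add (f4_mul (x k) (f4_conj (y k))) acc) [0..<n] F0"

definition herm_dual :: "nat \<Rightarrow> (nat \<Rightarrow> f4) set \<Rightarrow> (nat \<Rightarrow> f4) set" where
  "herm_dual n D = {x \<in> vecs n. \<forall>y\<in>D. herm n x y = F0}"

definition herm_self_dual :: "nat \<Rightarrow> (nat \<Rightarrow> f4) set \<Rightarrow> bool" where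
  "herm_self_dual n D \<longleftrightarrow> linear_code n D \<and> D = herm_dual n D"

definition wt :: "nat \<Rightarrow> (nat \<Rightarrow> f4) \<Rightarrow> nat" where
  "wt n x = card {k \<in> {0..<n}. x k \<noteq> F0}"

definition min_weight :: "nat \<Rightarrow> (nat \<Rightarrow> f4) set \<Rightarrow> nat" where
  "min_weight n D = Min (wt n ` (D - {\<lambda>k. F0}))"

definition near_extremal :: "nat \<Rightarrow> (nat \<Rightarrow> f4) set \<Rightarrow> bool" where
  "near_extremal n D \<longleftrightarrow> herm_self_dual n D \<and> D - {\<lambda>k. F0} \<noteq> {}
     \<and> min_weight n D = 2 * (n div 6)"

end

theory Submission
  imports Defs "HOL-Library.FuncSet" "HOL-Computational_Algebra.Polynomial_Factorial"
    "HOL-Computational_Algebra.Field_as_Ring"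
begin


lemma f4_UNIV: "(UNIV::f4 set) = {F0,F1,FW,FW2}"
  by (auto intro: f4.exhaust)
lemma finite_f4[simp]: "finite (UNIV::f4 set)"
  by (simp add: f4_UNIV)
lemma card_f4: "card (UNIV::f4 set) = 4"
  by (simp add: f4_UNIV)

lemma f4l_add_comm: "f4_add x y = f4_add y x" by (cases x; cases y; simp)
lemma f4l_add_assoc: "f4_add (f4_add x y) z = f4_add x (f4_add y z)" by (cases x; cases y; cases z; simp)
lemma f4l_add_0r[simp]: "f4_add x F0 = x" by (cases x; simp)
lemma f4l_add_self[simp]: "f4_add x x = F0" by (cases x; simp)
lemma f4l_add_cancel[simp]: "f4_add (f4_add x y) y = x" by (cases x; cases y; simp)
lemma f4l_mul_0r[simp]: "f4_mul x F0 = F0" by (cases x; simp)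
lemma f4l_mul_1r[simp]: "f4_mul x F1 = x" by (cases x; simp)
lemma f4l_mul_1l[simp]: "f4_mul F1 x = x" by (cases x; simp)
lemma f4l_mul_comm: "f4_mul x y = f4_mul y x" by (cases x; cases y; simp)
lemma f4l_mul_assoc: "f4_mul (f4_mul x y) z = f4_mul x (f4_mul y z)" by (cases x; cases y; cases z; simp)
lemma f4l_distrib: "f4_mul a (f4_add x y) = f4_add (f4_mul a x) (f4_mul a y)" by (cases a; cases x; cases y; simp)
lemma f4l_conj_add: "f4_conj (f4_add x y) = f4_add (f4_conj x) (f4_conj y)" by (cases x; cases y; simp add: f4_conj_def)
lemma f4l_conj_mul: "f4_conj (f4_mul x y) = f4_mul (f4_conj x) (f4_conj y)" by (cases x; cases y; simp add: f4_conj_def)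
lemma f4l_conj_0[simp]: "f4_conj F0 = F0" by (simp add: f4_conj_def)
lemma f4l_conj_eq0[simp]: "f4_conj x = F0 \<longleftrightarrow> x = F0" by (cases x; simp add: f4_conj_def)
lemma f4l_mul_eq0[simp]: "f4_mul x y = F0 \<longleftrightarrow> x = F0 \<or> y = F0" by (cases x; cases y; simp)
lemma f4l_cube: "f4_mul x (f4_conj x) = (if x = F0 then F0 else F1)" by (cases x; simp add: f4_conj_def)
lemma f4l_solve_FW: "b \<noteq> F0 \<Longrightarrow> \<exists>a. f4_mul a b = FW" 
  by (cases b) (auto intro: exI[of _ FW] exI[of _ F1] exI[of _ FW2])
lemma f4l_solve_FW_conj: "b \<noteq> F0 \<Longrightarrow> \<exists>a. f4_mul (f4_conj a) b = FW" 
  by (cases b) (auto simp: f4_conj_def intro: exI[of _ FW] exI[of _ F1] exI[of _ FW2])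

definition fsum :: "(nat \<Rightarrow> f4) \<Rightarrow> nat list \<Rightarrow> f4" where
  "fsum f xs = foldr (\<lambda>k acc. f4_add (f k) acc) xs F0"

lemma fsum_Nil[simp]: "fsum f [] = F0" by (simp add: fsum_def)
lemma fsum_Cons[simp]: "fsum f (k # xs) = f4_add (f k) (fsum f xs)" by (simp add: fsum_def)

lemma fsum_add: "fsum (\<lambda>k. f4_add (f k) (g k)) xs = f4_add (fsum f xs) (fsum g xs)"
  by (induction xs) (simp_all, metis f4l_add_assoc f4l_add_comm)

lemma fsum_scale: "fsum (\<lambda>k. f4_mul a (f k)) xs = f4_mul a (fsum f xs)"
  by (induction xs) (simp_all add: f4l_distrib)

lemma fsum_zero: "(\<forall>k\<in>set xs. f k = F0) \<Longrightarrow> fsum f xs = F0"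
  by (induction xs) auto

lemma fsum_single: "distinct xs \<Longrightarrow> k0 \<in> set xs \<Longrightarrow> (\<forall>k\<in>set xs. k \<noteq> k0 \<longrightarrow> f k = F0) \<Longrightarrow> fsum f xs = f k0"
proof (induction xs)
  case (Cons a xs)
  show ?case
  proof (cases "a = k0")
    case True
    then have "fsum f xs = F0" using Cons by (intro fsum_zero) auto
    then show ?thesis using True by simp
  next
    case False
    then show ?thesis using Cons by (simp add: f4l_add_comm)
  qed
qed simp

lemma fsum_parity: "distinct xs \<Longrightarrow> fsum (\<lambda>k. f4_mul (x k) (f4_conj (x k))) xs
   = (if odd (card {k\<in>set xs. x k \<noteq> F0}) then F1 else F0)"
proof (induction xs)
  case (Cons a xs)
  let ?A = "{k\<in>set xs. x k \<noteq> F0}"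
  have fin: "finite ?A" by simp
  have c: "card {k\<in>set (a#xs). x k \<noteq> F0} = (if x a = F0 then card ?A else Suc (card ?A))"
  proof (cases "x a = F0")
    case True
    then have "{k\<in>set (a#xs). x k \<noteq> F0} = ?A" by auto
    then show ?thesis using True by simp
  next
    case False
    then have "{k\<in>set (a#xs). x k \<noteq> F0} = insert a ?A" by auto
    moreover have "a \<notin> ?A" using Cons.prems by simp
    ultimately show ?thesis using False fin by simp
  qed
  show ?case using Cons by (subst c) (cases "x a = F0"; auto simp: f4l_cube)
qed simp

lemma herm_fsum: "herm n x y = fsum (\<lambda>k. f4_mul (x k) (f4_conj (y k))) [0..<n]"
  by (simp add: herm_def fsum_def)

lemma herm_add_left: "herm n (vadd x x') y = f4_add (herm n x y) (herm n x' y)"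
  unfolding herm_fsum vadd_def by (simp add: f4l_mul_comm[of _ "f4_conj _"] f4l_distrib fsum_add)

lemma herm_add_right: "herm n y (vadd x x') = f4_add (herm n y x) (herm n y x')"
  unfolding herm_fsum vadd_def by (simp add: f4l_conj_add f4l_distrib fsum_add)

lemma herm_scale_right: "herm n y (vscale a x) = f4_mul (f4_conj a) (herm n y x)"
proof -
  have "\<And>k. f4_mul (y k) (f4_conj (f4_mul a (x k))) = f4_mul (f4_conj a) (f4_mul (y k) (f4_conj (x k)))"
    by (metis f4l_conj_mul f4l_mul_assoc f4l_mul_comm)
  then show ?thesis unfolding herm_fsum vscale_def by (simp add: fsum_scale)
qed

lemma herm_unit_left: "k0 < n \<Longrightarrow> herm n (\<lambda>j. if j = k0 then a else F0) x = f4_mul a (f4_conj (x k0))"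
  unfolding herm_fsum by (subst fsum_single[of "[0..<n]" k0]) auto

lemma herm_zero: "(\<forall>k<n. y k = F0 \<or> x k = F0) \<Longrightarrow> herm n y x = F0"
  unfolding herm_fsum by (rule fsum_zero) auto

lemma herm_self: "herm n x x = (if odd (wt n x) then F1 else F0)"
  unfolding herm_fsum wt_def by (simp add: fsum_parity)

definition chi :: "f4 \<Rightarrow> int" where
  "chi a = (if a = F0 \<or> a = F1 then 1 else -1)"

lemma chi_FW: "chi (f4_add b FW) = - chi b" by (cases b; simp add: chi_def)

definition Lset :: "nat set \<Rightarrow> (nat \<Rightarrow> f4) set" where
  "Lset I = {y. \<forall>k. k \<notin> I \<longrightarrow> y k = F0}"

lemma vecs_Lset: "vecs n = Lset {0..<n}"
  by (auto simp: vecs_def Lset_def)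

lemma Lset_image: "Lset I = (\<lambda>f k. if k \<in> I then f k else F0) ` (PiE I (\<lambda>_. UNIV))"
proof
  show "Lset I \<subseteq> (\<lambda>f k. if k \<in> I then f k else F0) ` (PiE I (\<lambda>_. UNIV))"
  proof
    fix y assume "y \<in> Lset I"
    then have "y = (\<lambda>k. if k \<in> I then restrict y I k else F0)" by (intro ext) (auto simp: Lset_def)
    moreover have "restrict y I \<in> PiE I (\<lambda>_. UNIV)" by simp
    ultimately show "y \<in> (\<lambda>f k. if k \<in> I then f k else F0) ` (PiE I (\<lambda>_. UNIV))" by (rule image_eqI)
  qed
next
  show "(\<lambda>f k. if k \<in> I then f k else F0) ` (PiE I (\<lambda>_. UNIV)) \<subseteq> Lset I"
    unfolding Lset_def by (rule image_subsetI) simp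
qed

lemma Lset_card: assumes "finite I" shows "finite (Lset I)" "card (Lset I) = 4 ^ card I"
proof -
  have inj: "inj_on (\<lambda>f k. if k \<in> I then f k else F0) (PiE I (\<lambda>_. UNIV))"
  proof (rule inj_onI)
    fix f g assume f: "f \<in> PiE I (\<lambda>_. UNIV)" and g: "g \<in> PiE I (\<lambda>_. UNIV)"
      and e: "(\<lambda>k. if k \<in> I then f k else F0) = (\<lambda>k. if k \<in> I then g k else F0)"
    show "f = g"
    proof
      fix k show "f k = g k"
        using f g fun_cong[OF e, of k] by (cases "k \<in> I") (auto simp: PiE_def extensional_def)
    qed
  qed
  show "finite (Lset I)" unfolding Lset_image using assms by (intro finite_imageI finite_PiE) auto
  show "card (Lset I) = 4 ^ card I" unfolding Lset_image
    by (simp add: card_image[OF inj] card_PiE[OF assms] card_f4)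
qed

lemma involution_sum_zero:
  fixes f :: "'a \<Rightarrow> int"
  assumes "finite S" "\<And>x. x \<in> S \<Longrightarrow> \<sigma> x \<in> S" "\<And>x. x \<in> S \<Longrightarrow> \<sigma> (\<sigma> x) = x"
    "\<And>x. x \<in> S \<Longrightarrow> f (\<sigma> x) = - f x"
  shows "sum f S = 0"
proof -
  have "sum f S = sum (\<lambda>x. f (\<sigma> x)) S"
    by (rule sum.reindex_bij_witness[where i=\<sigma> and j=\<sigma>]) (use assms in auto)
  also have "\<dots> = - sum f S" using assms(4) by (simp add: sum_negf)
  finally show ?thesis by simp
qed




definition DI :: "(nat \<Rightarrow> f4) set \<Rightarrow> nat set \<Rightarrow> (nat \<Rightarrow> f4) set" where
  "DI D I = {c\<in>D. \<forall>k. c k \<noteq> F0 \<longrightarrow> k \<in> I}"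

lemma lin_sub: "linear_code n D \<Longrightarrow> D \<subseteq> vecs n" by (simp add: linear_code_def)

lemma finite_D: "linear_code n D \<Longrightarrow> finite D"
  using lin_sub Lset_card(1)[of "{0..<n}"] vecs_Lset by (metis finite_atLeastLessThan finite_subset)

lemma vadd_cancel: "vadd (vadd x z) z = x"
  by (rule ext) (simp add: vadd_def)

lemma sum_y_fixed:
  assumes lin: "linear_code n D" and sd: "D = herm_dual n D" and y: "y \<in> vecs n"
  shows "(\<Sum>x\<in>D. chi (herm n y x)) = (if y \<in> D then int (card D) else 0)"
proof (cases "y \<in> D")
  case True
  then have "y \<in> herm_dual n D" using sd by simp
  then have "\<forall>x\<in>D. herm n y x = F0" by (simp add: herm_dual_def)
  then have "(\<Sum>x\<in>D. chi (herm n y x)) = (\<Sum>x\<in>D. 1)" by (intro sum.cong) (auto simp: chi_def)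
  then show ?thesis using True by simp
next
  case False
  then have "y \<notin> herm_dual n D" using sd by simp
  then obtain x0 where x0: "x0 \<in> D" "herm n y x0 \<noteq> F0" using y by (auto simp: herm_dual_def)
  obtain a where a: "f4_mul (f4_conj a) (herm n y x0) = FW" using f4l_solve_FW_conj[OF x0(2)] by blast
  have "(\<Sum>x\<in>D. chi (herm n y x)) = 0"
  proof (rule involution_sum_zero[where \<sigma>="\<lambda>x. vadd x (vscale a x0)"])
    show "finite D" using finite_D[OF lin] .
    show "\<And>x. x \<in> D \<Longrightarrow> vadd x (vscale a x0) \<in> D" using lin x0(1) by (simp add: linear_code_def)
    show "\<And>x. x \<in> D \<Longrightarrow> vadd (vadd x (vscale a x0)) (vscale a x0) = x" by (rule vadd_cancel)
    show "\<And>x. x \<in> D \<Longrightarrow> chi (herm n y (vadd x (vscale a x0))) = - chi (herm n y x)"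
      by (simp add: herm_add_right herm_scale_right a chi_FW)
  qed
  then show ?thesis using False by simp
qed

lemma sum_x_fixed:
  assumes x: "x \<in> vecs n" and I: "I \<subseteq> {0..<n}"
  shows "(\<Sum>y\<in>Lset I. chi (herm n y x)) = (if \<forall>k\<in>I. x k = F0 then 4 ^ card I else 0)"
proof -
  have finI: "finite I" using I finite_subset by blast
  show ?thesis
  proof (cases "\<forall>k\<in>I. x k = F0")
    case True
    have "\<forall>y\<in>Lset I. herm n y x = F0"
      using True by (auto simp: Lset_def intro!: herm_zero)
    then have "(\<Sum>y\<in>Lset I. chi (herm n y x)) = (\<Sum>y\<in>Lset I. 1)" by (intro sum.cong) (auto simp: chi_def)
    then show ?thesis using True Lset_card[OF finI] by simp
  next
    case False
    then obtain k0 where k0: "k0 \<in> I" "x k0 \<noteq> F0" by blast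
    have k0n: "k0 < n" using k0 I by auto
    obtain a where a: "f4_mul a (f4_conj (x k0)) = FW" using f4l_solve_FW[of "f4_conj (x k0)"] k0 by auto
    let ?e = "\<lambda>j. if j = k0 then a else F0"
    have "(\<Sum>y\<in>Lset I. chi (herm n y x)) = 0"
    proof (rule involution_sum_zero[where \<sigma>="\<lambda>y. vadd y ?e"])
      show "finite (Lset I)" using Lset_card[OF finI] by simp
      show "\<And>y. y \<in> Lset I \<Longrightarrow> vadd y ?e \<in> Lset I" using k0 by (auto simp: Lset_def vadd_def)
      show "\<And>y. y \<in> Lset I \<Longrightarrow> vadd (vadd y ?e) ?e = y" by (rule vadd_cancel)
      show "\<And>y. y \<in> Lset I \<Longrightarrow> chi (herm n (vadd y ?e) x) = - chi (herm n y x)"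
        by (simp add: herm_add_left herm_unit_left[OF k0n] a chi_FW)
    qed
    then show ?thesis using False by simp
  qed
qed

lemma sum_if_const: "finite A \<Longrightarrow> (\<Sum>y\<in>A. if P y then (c::int) else 0) = c * int (card {y\<in>A. P y})"
  by (simp add: sum.inter_filter[symmetric])

lemma poisson:
  assumes lin: "linear_code n D" and sd: "D = herm_dual n D" and I: "I \<subseteq> {0..<n}"
  shows "card D * card (DI D I) = 4 ^ card I * card (DI D ({0..<n} - I))"
proof -
  have finI: "finite I" using I finite_subset by blast
  have finL: "finite (Lset I)" using Lset_card[OF finI] by simp
  have finD: "finite D" using finite_D[OF lin] .
  have Lv: "Lset I \<subseteq> vecs n" using I by (auto simp: Lset_def vecs_def)
  have Dv: "D \<subseteq> vecs n" using lin_sub[OF lin] .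
  have "(\<Sum>y\<in>Lset I. \<Sum>x\<in>D. chi (herm n y x)) = (\<Sum>y\<in>Lset I. if y \<in> D then int (card D) else 0)"
    using Lv by (intro sum.cong refl sum_y_fixed[OF lin sd]) auto
  also have "\<dots> = int (card D) * int (card {y\<in>Lset I. y \<in> D})" by (rule sum_if_const[OF finL])
  also have "{y\<in>Lset I. y \<in> D} = DI D I" by (auto simp: Lset_def DI_def)
  finally have 1: "(\<Sum>y\<in>Lset I. \<Sum>x\<in>D. chi (herm n y x)) = int (card D) * int (card (DI D I))" .
  have "(\<Sum>y\<in>Lset I. \<Sum>x\<in>D. chi (herm n y x)) = (\<Sum>x\<in>D. \<Sum>y\<in>Lset I. chi (herm n y x))"
    by (rule sum.swap)
  also have "\<dots> = (\<Sum>x\<in>D. if \<forall>k\<in>I. x k = F0 then 4 ^ card I else 0)"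
    using Dv by (intro sum.cong refl sum_x_fixed[OF _ I]) auto
  also have "\<dots> = 4 ^ card I * int (card {x\<in>D. \<forall>k\<in>I. x k = F0})" by (rule sum_if_const[OF finD])
  also have "{x\<in>D. \<forall>k\<in>I. x k = F0} = DI D ({0..<n} - I)"
    using Dv unfolding DI_def vecs_def by (auto, metis (mono_tags, lifting) mem_Collect_eq not_le subsetD)
  finally have 2: "(\<Sum>y\<in>Lset I. \<Sum>x\<in>D. chi (herm n y x)) = 4 ^ card I * int (card (DI D ({0..<n} - I)))" .
  from 1 2 have "int (card D * card (DI D I)) = int (4 ^ card I * card (DI D ({0..<n} - I)))" by simp
  then show ?thesis by (simp only: of_nat_eq_iff)
qed




lemma pow_binom:
  fixes a b :: real
  assumes "finite A"
  shows "(\<Sum>K\<in>Pow A. a ^ card K * b ^ (card A - card K)) = (a + b) ^ card A"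
proof -
  have "(a + b) ^ card A = (\<Prod>x\<in>A. a + b)" by simp
  also have "\<dots> = (\<Sum>X\<in>Pow A. (\<Prod>x\<in>X. a) * (\<Prod>x\<in>A-X. b))" by (rule prod_add[OF assms])
  also have "\<dots> = (\<Sum>K\<in>Pow A. a ^ card K * b ^ (card A - card K))"
  proof (intro sum.cong refl)
    fix X assume "X \<in> Pow A"
    then have "card (A - X) = card A - card X" using assms by (simp add: card_Diff_subset finite_subset)
    then show "(\<Prod>x\<in>X. a) * (\<Prod>x\<in>A-X. b) = a ^ card X * b ^ (card A - card X)" by simp
  qed
  finally show ?thesis by simp
qed

lemma superset_binom:
  fixes a b :: real
  assumes A: "finite A" and S: "S \<subseteq> A"
  shows "(\<Sum>I\<in>{I\<in>Pow A. S \<subseteq> I}. a ^ card I * b ^ (card A - card I)) = a ^ card S * (a + b) ^ (card A - card S)"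
proof -
  have finS: "finite S" using A S finite_subset by blast
  have eq: "{I\<in>Pow A. S \<subseteq> I} = (\<lambda>K. S \<union> K) ` Pow (A - S)" 
  proof
    show "{I\<in>Pow A. S \<subseteq> I} \<subseteq> (\<lambda>K. S \<union> K) ` Pow (A - S)"
    proof
      fix I assume "I \<in> {I\<in>Pow A. S \<subseteq> I}"
      then have "I = S \<union> (I - S)" "I - S \<in> Pow (A - S)" by auto
      then show "I \<in> (\<lambda>K. S \<union> K) ` Pow (A - S)" by blast
    qed
  qed (use S in auto)
  have inj: "inj_on (\<lambda>K. S \<union> K) (Pow (A - S))"
    by (rule inj_onI) auto
  have "(\<Sum>I\<in>{I\<in>Pow A. S \<subseteq> I}. a ^ card I * b ^ (card A - card I))
      = (\<Sum>K\<in>Pow (A - S). a ^ card (S \<union> K) * b ^ (card A - card (S \<union> K)))"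
    unfolding eq by (simp add: sum.reindex[OF inj])
  also have "\<dots> = (\<Sum>K\<in>Pow (A - S). a ^ card S * (a ^ card K * b ^ (card (A - S) - card K)))"
  proof (intro sum.cong refl)
    fix K assume K: "K \<in> Pow (A - S)"
    have finK: "finite K" using K A finite_subset by auto
    have c1: "card (S \<union> K) = card S + card K" using K finS finK by (subst card_Un_disjoint) auto
    have c2: "card (A - S) = card A - card S" using A S by (simp add: card_Diff_subset finS)
    show "a ^ card (S \<union> K) * b ^ (card A - card (S \<union> K)) = a ^ card S * (a ^ card K * b ^ (card (A - S) - card K))"
      by (simp add: c1 c2 power_add)
  qed
  also have "\<dots> = a ^ card S * (a + b) ^ card (A - S)"
    by (simp add: sum_distrib_left[symmetric] pow_binom A)
  also have "card (A - S) = card A - card S" using A S by (simp add: card_Diff_subset finS)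
  finally show ?thesis .
qed

lemma swap_count:
  fixes f :: "nat set \<Rightarrow> real"
  assumes A: "finite A" and D: "finite D"
  shows "(\<Sum>I\<in>Pow A. real (card {c\<in>D. T c \<subseteq> I}) * f I) = (\<Sum>c\<in>D. \<Sum>I\<in>{I\<in>Pow A. T c \<subseteq> I}. f I)"
proof -
  have "(\<Sum>I\<in>Pow A. real (card {c\<in>D. T c \<subseteq> I}) * f I) = (\<Sum>I\<in>Pow A. \<Sum>c\<in>D. if T c \<subseteq> I then f I else 0)"
  proof (intro sum.cong refl)
    fix I
    have "real (card {c\<in>D. T c \<subseteq> I}) = (\<Sum>c\<in>D. if T c \<subseteq> I then 1 else 0)"
      using D by (simp add: sum.inter_filter[symmetric])
    then show "real (card {c\<in>D. T c \<subseteq> I}) * f I = (\<Sum>c\<in>D. if T c \<subseteq> I then f I else 0)"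
      by (auto simp: sum_distrib_right intro!: sum.cong)
  qed
  also have "\<dots> = (\<Sum>c\<in>D. \<Sum>I\<in>Pow A. if T c \<subseteq> I then f I else 0)" by (rule sum.swap)
  also have "\<dots> = (\<Sum>c\<in>D. \<Sum>I\<in>{I\<in>Pow A. T c \<subseteq> I}. f I)"
  proof (rule sum.cong[OF refl])
    fix c show "(\<Sum>I\<in>Pow A. if T c \<subseteq> I then f I else 0) = (\<Sum>I\<in>{I\<in>Pow A. T c \<subseteq> I}. f I)"
      using finite_Pow_iff[THEN iffD2, OF A] by (rule sum.inter_filter[symmetric])
  qed
  finally show ?thesis .
qed

definition supp :: "nat \<Rightarrow> (nat \<Rightarrow> f4) \<Rightarrow> nat set" where
  "supp n c = {k\<in>{0..<n}. c k \<noteq> F0}"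

lemma wt_supp: "wt n c = card (supp n c)" by (simp add: wt_def supp_def)

lemma supp_sub: "supp n c \<subseteq> {0..<n}" by (auto simp: supp_def)

lemma DI_supp: "D \<subseteq> vecs n \<Longrightarrow> DI D I = {c\<in>D. supp n c \<subseteq> I}"
  unfolding DI_def supp_def vecs_def by (auto, metis (mono_tags, lifting) mem_Collect_eq not_le subsetD)

lemma DI_insert: "D \<subseteq> vecs n \<Longrightarrow> DI D (insert i J) = {c\<in>D. supp n c - {i} \<subseteq> J}"
  by (auto simp: DI_supp)

definition Rf :: "(nat \<Rightarrow> f4) set \<Rightarrow> nat \<Rightarrow> nat \<Rightarrow> real \<Rightarrow> real \<Rightarrow> real" where
  "Rf D n i s t = (\<Sum>c\<in>{c\<in>D. c i = F0}. s ^ wt n c * (s + t) ^ (n - 1 - wt n c))"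

definition Gf :: "(nat \<Rightarrow> f4) set \<Rightarrow> nat \<Rightarrow> real \<Rightarrow> real \<Rightarrow> real" where
  "Gf D n t s = (\<Sum>c\<in>D. t ^ wt n c * (t + 4 * s) ^ (n - wt n c))"

lemma local_identity:
  assumes lin: "linear_code n D" and sd: "D = herm_dual n D" and i: "i < n"
  shows "real (card D) * t * Rf D n i s t + 4 * s * Rf D n i t (4 * s) = Gf D n t s"
proof -
  define A where "A = {0..<n} - {i}"
  have finA: "finite A" by (simp add: A_def)
  have cardA: "card A = n - 1" using i by (simp add: A_def)
  have finD: "finite D" using finite_D[OF lin] .
  have Dv: "D \<subseteq> vecs n" using lin_sub[OF lin] .
  have suppA: "\<And>c. supp n c \<subseteq> A \<longleftrightarrow> c i = F0" using i by (auto simp: A_def supp_def)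
  have TA: "\<And>c. supp n c - {i} \<subseteq> A" by (auto simp: A_def supp_def)
  have L: "(\<Sum>I\<in>Pow A. real (card (DI D I)) * (s ^ card I * t ^ (card A - card I))) = Rf D n i s t"
  proof -
    have "(\<Sum>I\<in>Pow A. real (card (DI D I)) * (s ^ card I * t ^ (card A - card I)))
       = (\<Sum>I\<in>Pow A. real (card {c\<in>D. supp n c \<subseteq> I}) * (s ^ card I * t ^ (card A - card I)))"
      by (simp add: DI_supp[OF Dv])
    also have "\<dots> = (\<Sum>c\<in>D. \<Sum>I\<in>{I\<in>Pow A. supp n c \<subseteq> I}. s ^ card I * t ^ (card A - card I))"
      by (rule swap_count[OF finA finD])
    also have "\<dots> = (\<Sum>c\<in>D. if c i = F0 then s ^ wt n c * (s + t) ^ (n - 1 - wt n c) else 0)"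
    proof (intro sum.cong refl)
      fix c assume "c \<in> D"
      show "(\<Sum>I\<in>{I\<in>Pow A. supp n c \<subseteq> I}. s ^ card I * t ^ (card A - card I)) =
            (if c i = F0 then s ^ wt n c * (s + t) ^ (n - 1 - wt n c) else 0)"
      proof (cases "c i = F0")
        case True
        then show ?thesis using superset_binom[OF finA, of "supp n c" s t] suppA[of c]
          by (simp add: wt_supp cardA)
      next
        case False
        then have E: "{I\<in>Pow A. supp n c \<subseteq> I} = {}" using suppA[of c] by auto
        show ?thesis using False by (simp only: E sum.empty) simp
      qed
    qed
    also have "\<dots> = Rf D n i s t" unfolding Rf_def by (rule sum.inter_filter[symmetric, OF finD])
    finally show ?thesis .
  qed
  have Q: "real (card D) * Rf D n i s t = (\<Sum>c\<in>D. t ^ card (supp n c - {i}) * (t + 4 * s) ^ (n - 1 - card (supp n c - {i})))"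
  proof -
    have "real (card D) * Rf D n i s t = (\<Sum>I\<in>Pow A. real (card D * card (DI D I)) * (s ^ card I * t ^ (card A - card I)))"
      by (simp add: L[symmetric] sum_distrib_left mult.assoc)
    also have "\<dots> = (\<Sum>I\<in>Pow A. real (card (DI D (insert i (A - I)))) * ((4 * s) ^ card I * t ^ (card A - card I)))"
    proof (intro sum.cong refl)
      fix I assume I: "I \<in> Pow A"
      then have "I \<subseteq> {0..<n}" by (auto simp: A_def)
      from poisson[OF lin sd this] have "card D * card (DI D I) = 4 ^ card I * card (DI D ({0..<n} - I))" .
      moreover have "{0..<n} - I = insert i (A - I)" using I i by (auto simp: A_def)
      ultimately show "real (card D * card (DI D I)) * (s ^ card I * t ^ (card A - card I)) =
         real (card (DI D (insert i (A - I)))) * ((4 * s) ^ card I * t ^ (card A - card I))"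
        by (simp add: power_mult_distrib)
    qed
    also have "\<dots> = (\<Sum>J\<in>Pow A. real (card (DI D (insert i J))) * ((4 * s) ^ card (A - J) * t ^ (card A - card (A - J))))"
    proof -
      have dd: "\<And>a. a \<subseteq> A \<Longrightarrow> A - (A - a) = a" by auto
      show ?thesis by (rule sum.reindex_bij_witness[where i="\<lambda>J. A - J" and j="\<lambda>J. A - J"]) (auto simp: dd)
    qed
    also have "\<dots> = (\<Sum>J\<in>Pow A. real (card {c\<in>D. supp n c - {i} \<subseteq> J}) * (t ^ card J * (4 * s) ^ (card A - card J)))"
    proof (intro sum.cong refl)
      fix J assume J: "J \<in> Pow A"
      have finJ: "finite J" using J finA finite_subset by auto
      have "card (A - J) = card A - card J" using J finJ by (simp add: card_Diff_subset)
      moreover have "card A - (card A - card J) = card J" using J finA by (simp add: card_mono diff_diff_cancel)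
      ultimately show "real (card (DI D (insert i J))) * ((4 * s) ^ card (A - J) * t ^ (card A - card (A - J))) =
           real (card {c\<in>D. supp n c - {i} \<subseteq> J}) * (t ^ card J * (4 * s) ^ (card A - card J))"
        by (simp add: DI_insert[OF Dv])
    qed
    also have "\<dots> = (\<Sum>c\<in>D. \<Sum>J\<in>{J\<in>Pow A. supp n c - {i} \<subseteq> J}. t ^ card J * (4 * s) ^ (card A - card J))"
      by (rule swap_count[OF finA finD])
    also have "\<dots> = (\<Sum>c\<in>D. t ^ card (supp n c - {i}) * (t + 4 * s) ^ (n - 1 - card (supp n c - {i})))"
      by (rule sum.cong[OF refl]) (subst superset_binom[OF finA TA], simp add: cardA)
    finally show ?thesis .
  qed
  have trm: "t * (t ^ card (supp n c - {i}) * (t + 4 * s) ^ (n - 1 - card (supp n c - {i})))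
      = t ^ wt n c * (t + 4 * s) ^ (n - wt n c) - (if c i = F0 then 4 * s * (t ^ wt n c * (t + 4 * s) ^ (n - 1 - wt n c)) else 0)"
    if c: "c \<in> D" for c
  proof -
    have wtle: "wt n c \<le> n" using supp_sub[of n c] by (simp add: wt_supp card_mono[of "{0..<n}", simplified])
    show ?thesis
    proof (cases "c i = F0")
      case True
      then have e: "supp n c - {i} = supp n c" by (auto simp: supp_def)
      have wl: "wt n c \<le> n - 1" using suppA[of c] True cardA finA by (metis card_mono wt_supp)
      have "n - wt n c = Suc (n - 1 - wt n c)" using wl i by linarith
      then show ?thesis using True by (simp add: e wt_supp[symmetric] algebra_simps)
    next
      case False
      have iin: "i \<in> supp n c" using False i by (simp add: supp_def)
      have c1: "card (supp n c - {i}) = wt n c - 1" using iin by (simp add: wt_supp)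
      have w1: "wt n c \<ge> 1" using iin by (simp add: wt_supp card_gt_0_iff Suc_le_eq[symmetric]; metis card_gt_0_iff empty_iff finite_subset supp_sub finite_atLeastLessThan Suc_leI)
      have "t ^ wt n c = t * t ^ (wt n c - 1)" using w1 by (metis One_nat_def Suc_pred' less_eq_Suc_le power_Suc)
      moreover have "n - 1 - (wt n c - 1) = n - wt n c" using w1 wtle by linarith
      ultimately show ?thesis using False by (simp add: c1)
    qed
  qed
  have "real (card D) * t * Rf D n i s t = (\<Sum>c\<in>D. t * (t ^ card (supp n c - {i}) * (t + 4 * s) ^ (n - 1 - card (supp n c - {i}))))"
    by (simp add: mult.commute[of _ t] mult.assoc Q sum_distrib_left)
  also have "\<dots> = (\<Sum>c\<in>D. t ^ wt n c * (t + 4 * s) ^ (n - wt n c)) - (\<Sum>c\<in>D. if c i = F0 then 4 * s * (t ^ wt n c * (t + 4 * s) ^ (n - 1 - wt n c)) else 0)"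
    by (subst sum_subtractf[symmetric]) (rule sum.cong[OF refl], rule trm)
  also have "(\<Sum>c\<in>D. if c i = F0 then 4 * s * (t ^ wt n c * (t + 4 * s) ^ (n - 1 - wt n c)) else 0) = 4 * s * Rf D n i t (4 * s)"
    unfolding Rf_def sum_distrib_left by (rule sum.inter_filter[symmetric, OF finD, where P="\<lambda>c. c i = F0"])
  finally show ?thesis unfolding Gf_def by simp
qed




lemma coprime_lin:
  fixes a b :: "real poly"
  assumes "is_unit (a + b) \<or> is_unit (b - a)"
  shows "coprime a b"
proof (rule coprimeI)
  fix c assume "c dvd a" "c dvd b"
  then have "c dvd a + b" "c dvd b - a" by auto
  then show "is_unit c" using assms by (meson dvd_unit_imp_unit)
qed

lemma poly_deg1: "degree (q::real poly) \<le> 1 \<Longrightarrow> poly q z = coeff q 0 + coeff q 1 * z"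
proof -
  assume d: "degree q \<le> 1"
  have "poly q z = (\<Sum>i\<le>degree q. coeff q i * z ^ i)" by (rule poly_altdef)
  also have "\<dots> = (\<Sum>i\<le>1. coeff q i * z ^ i)"
    by (rule sum.mono_neutral_left) (use d in \<open>auto simp: coeff_eq_0\<close>)
  finally show ?thesis by simp
qed

lemma poly_key:
  fixes e et :: "real poly" and K :: real and m :: nat
  assumes m: "m \<ge> 1" and K: "K > 0"
    and rel: "\<And>z. K * (1 - z) * poly e z + 4 * z * poly et z = 0"
    and d1: "[:0,1:] ^ (2*m) dvd e"
    and d2: "[:1,-1:] ^ (2*m) dvd et"
    and ev: "\<And>z. poly e (-z) = poly e z"
    and deg: "degree e \<le> 6*m - 1"
    and fx: "poly et (1/3) = 2 ^ (6*m-1) * poly e (1/3)"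
  shows "e = 0"
proof -
  define L :: "real poly" where "L = [:1,-1:]"
  define X :: "real poly" where "X = [:0,1:]"
  define M :: "real poly" where "M = [:1,1:]"
  have relp: "smult K (L * e) = - ([:0,4:] * et)"
  proof -
    have "poly (smult K (L * e) + [:0,4:] * et) = poly 0"
    proof
      fix z show "poly (smult K (L * e) + [:0,4:] * et) z = poly 0 z"
        using rel[of z] by (simp add: L_def algebra_simps; linarith)
    qed
    then have "smult K (L * e) + [:0,4:] * et = 0" by (simp only: poly_eq_poly_eq_iff)
    then show ?thesis by (simp only: eq_neg_iff_add_eq_0)
  qed
  have "L ^ (2*m) dvd - ([:0,4:] * et)" using d2
    by (simp only: dvd_minus_iff L_def) (rule dvd_mult)
  then have "L ^ (2*m) dvd smult K (L * e)" by (simp only: relp)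
  then have "L * L ^ (2*m-1) dvd L * e"
    using K m by (simp add: dvd_smult_iff power_Suc[symmetric])
  moreover have "L \<noteq> 0" by (simp add: L_def)
  ultimately have dL: "L ^ (2*m-1) dvd e" using dvd_times_left_cancel_iff by blast
  then obtain q1 where q1: "e = L ^ (2*m-1) * q1" by (elim dvdE)
  have "e = M ^ (2*m-1) * pcompose q1 [:0,-1:]"
  proof -
    have "poly e = poly (M ^ (2*m-1) * pcompose q1 [:0,-1:])"
    proof
      fix z
      have "poly e z = poly e (-z)" by (simp add: ev)
      also have "\<dots> = (1 + z) ^ (2*m-1) * poly q1 (-z)" by (subst q1) (simp add: L_def)
      finally show "poly e z = poly (M ^ (2*m-1) * pcompose q1 [:0,-1:]) z"
        by (simp add: M_def poly_pcompose)
    qed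
    then show ?thesis by (simp only: poly_eq_poly_eq_iff)
  qed
  then have dM: "M ^ (2*m-1) dvd e" by (metis dvd_triv_left)
  have cXL: "coprime X L"
  proof (rule coprime_lin)
    have "X + L = [:1:]" by (simp add: X_def L_def)
    then show "is_unit (X + L) \<or> is_unit (L - X)" by (simp add: is_unit_const_poly_iff)
  qed
  have cXM: "coprime X M"
  proof (rule coprime_lin)
    have "M - X = [:1:]" by (simp add: X_def M_def)
    then show "is_unit (X + M) \<or> is_unit (M - X)" by (simp add: is_unit_const_poly_iff)
  qed
  have cLM: "coprime L M"
  proof (rule coprime_lin)
    have eq: "L + M = [:2:]" by (simp add: L_def M_def)
    have u: "is_unit ([:2:]::real poly)" by (simp only: is_unit_const_poly_iff) (simp add: dvd_field_iff)
    show "is_unit (L + M) \<or> is_unit (M - L)" by (rule disjI1) (subst eq, rule u)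
  qed
  have d12: "X ^ (2*m) * L ^ (2*m-1) dvd e"
    by (rule divides_mult) (use d1 dL cXL in \<open>simp_all add: X_def\<close>)
  have dP: "X ^ (2*m) * L ^ (2*m-1) * M ^ (2*m-1) dvd e"
    by (rule divides_mult[OF d12 dM]) (use cXM cLM in simp)
  define P where "P = X ^ (2*m) * L ^ (2*m-1) * M ^ (2*m-1)"
  obtain q where q: "e = P * q" using dP unfolding P_def by (elim dvdE)
  have P0: "P \<noteq> 0" by (simp add: P_def X_def L_def M_def)
  have degP: "degree P = 6*m - 2"
  proof -
    have "degree P = degree (X ^ (2*m)) + degree (L ^ (2*m-1)) + degree (M ^ (2*m-1))"
      unfolding P_def by (simp add: degree_mult_eq X_def L_def M_def)
    also have "\<dots> = 2*m + (2*m-1) + (2*m-1)"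
      by (simp add: X_def M_def L_def degree_linear_power)
    finally show ?thesis using m by simp
  qed
  have degq: "degree q \<le> 1"
  proof (cases "q = 0")
    case False
    then have "degree e = degree P + degree q" using q P0 by (simp add: degree_mult_eq)
    then show ?thesis using deg degP m by simp
  qed simp
  have Pz: "poly P z = z ^ (2*m) * ((1 - z) ^ (2*m-1) * (1 + z) ^ (2*m-1))" for z
    by (simp add: P_def X_def L_def M_def)
  have Pnz: "poly P z \<noteq> 0" if "z \<noteq> 0" "z \<noteq> 1" "z \<noteq> -1" for z :: real
    using that by (simp add: Pz)
  define \<alpha> where "\<alpha> = coeff q 0"
  define \<beta> where "\<beta> = coeff q 1"
  have qz: "poly q z = \<alpha> + \<beta> * z" for z using poly_deg1[OF degq] by (simp add: \<alpha>_def \<beta>_def)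
  have Psym: "poly P (-(1/2)) = poly P (1/2)" by (simp add: Pz)
  have "poly P (1/2) * (\<alpha> - \<beta> / 2) = poly P (1/2) * (\<alpha> + \<beta> / 2)"
    using ev[of "1/2"] Psym by (simp add: q qz)
  then have b0: "\<beta> = 0" using Pnz[of "1/2"] by simp
  have "K * (2/3) * poly e (1/3) + (4/3) * (2 ^ (6*m-1) * poly e (1/3)) = 0"
    using rel[of "1/3"] fx by simp
  then have "(K * (2/3) + (4/3) * 2 ^ (6*m-1)) * poly e (1/3) = 0" by (simp add: algebra_simps)
  moreover have "K * (2/3) + (4/3) * 2 ^ (6*m-1) > 0" using K by (simp add: add_pos_pos)
  ultimately have "poly e (1/3) = 0" by simp
  then have "poly P (1/3) * \<alpha> = 0" by (simp add: q qz b0)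
  then have a0: "\<alpha> = 0" using Pnz[of "1/3"] by simp
  have "poly q = poly 0" using a0 b0 qz by (intro ext) simp
  then have "q = 0" by (simp only: poly_eq_poly_eq_iff)
  then show ?thesis using q by simp
qed




definition z0 :: "nat \<Rightarrow> f4" where "z0 = (\<lambda>k. F0)"

lemma wt_le: "wt n c \<le> n"
  using card_mono[OF _ supp_sub[of n c]] by (simp add: wt_supp)

lemma wt_le_i: "i < n \<Longrightarrow> c i = F0 \<Longrightarrow> wt n c \<le> n - 1"
proof -
  assume i: "i < n" and ci: "c i = F0"
  have "supp n c \<subseteq> {0..<n} - {i}" using ci by (auto simp: supp_def)
  then have "card (supp n c) \<le> card ({0..<n} - {i})" by (intro card_mono) auto
  then show ?thesis using i by (simp add: wt_supp)
qed

lemma wt_z0[simp]: "wt n z0 = 0" by (simp add: wt_def z0_def)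

lemma ne_facts:
  assumes m: "m > 0" and ne: "near_extremal (6*m) D"
  shows "linear_code (6*m) D" "D = herm_dual (6*m) D" "z0 \<in> D" "finite D"
    "\<And>c. c \<in> D \<Longrightarrow> c \<noteq> z0 \<Longrightarrow> wt (6*m) c \<ge> 2*m"
    "\<And>c. c \<in> D \<Longrightarrow> even (wt (6*m) c)"
proof -
  show lin: "linear_code (6*m) D" using ne by (simp add: near_extremal_def herm_self_dual_def)
  show sd: "D = herm_dual (6*m) D" using ne by (simp add: near_extremal_def herm_self_dual_def)
  show "z0 \<in> D" using lin by (simp add: linear_code_def z0_def)
  show fin: "finite D" using finite_D[OF lin] .
  show "wt (6*m) c \<ge> 2*m" if "c \<in> D" "c \<noteq> z0" for c
  proof -
    have "Min (wt (6*m) ` (D - {\<lambda>k. F0})) = 2*m" using ne by (simp add: near_extremal_def min_weight_def)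
    moreover have "Min (wt (6*m) ` (D - {\<lambda>k. F0})) \<le> wt (6*m) c"
      using that fin by (intro Min_le) (auto simp: z0_def)
    ultimately show ?thesis by simp
  qed
  show "even (wt (6*m) c)" if c: "c \<in> D" for c
  proof -
    have "c \<in> herm_dual (6*m) D" using c sd by simp
    then have "herm (6*m) c c = F0" using c by (simp add: herm_dual_def)
    then show ?thesis by (simp add: herm_self split: if_splits)
  qed
qed

definition Sset :: "(nat \<Rightarrow> f4) set \<Rightarrow> nat \<Rightarrow> (nat \<Rightarrow> f4) set" where
  "Sset D i = {c\<in>D. c i = F0 \<and> c \<noteq> z0}"

definition ep :: "(nat \<Rightarrow> f4) set \<Rightarrow> nat \<Rightarrow> nat \<Rightarrow> real poly" where
  "ep D n i = (\<Sum>c\<in>Sset D i. monom 1 (wt n c))"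

definition etp :: "(nat \<Rightarrow> f4) set \<Rightarrow> nat \<Rightarrow> nat \<Rightarrow> real poly" where
  "etp D n i = (\<Sum>c\<in>Sset D i. [:1,-1:] ^ wt n c * [:1,3:] ^ (n - 1 - wt n c))"

lemma Rf_split:
  assumes z: "z0 \<in> D" and fin: "finite D"
  shows "Rf D n i z (1 - z) = 1 + poly (ep D n i) z"
    "Rf D n i (1 - z) (4 * z) = (1 + 3 * z) ^ (n - 1) + poly (etp D n i) z"
proof -
  have eq: "{c\<in>D. c i = F0} = insert z0 (Sset D i)" using z by (auto simp: Sset_def z0_def)
  have nin: "z0 \<notin> Sset D i" by (simp add: Sset_def)
  have finS: "finite (Sset D i)" using fin by (simp add: Sset_def)
  show "Rf D n i z (1 - z) = 1 + poly (ep D n i) z"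
    unfolding Rf_def eq ep_def using finS nin by (simp add: poly_sum poly_monom)
  show "Rf D n i (1 - z) (4 * z) = (1 + 3 * z) ^ (n - 1) + poly (etp D n i) z"
    unfolding Rf_def eq etp_def using finS nin by (simp add: poly_sum algebra_simps)
qed

lemma weight_count_const:
  assumes m: "m > 0" and ne: "near_extremal (6*m) D" and i: "i < 6*m" and j: "j < 6*m"
  shows "card {c\<in>Sset D i. wt (6*m) c = 2*m} = card {c\<in>Sset D j. wt (6*m) c = 2*m}"
proof -
  let ?n = "6*m"
  note F = ne_facts[OF m ne]
  have finS: "\<And>i. finite (Sset D i)" using F(4) by (simp add: Sset_def)
  define e where "e = ep D ?n i - ep D ?n j"
  define et where "et = etp D ?n i - etp D ?n j"
  have Kpos: "real (card D) > 0" using F(3,4) card_gt_0_iff by auto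
  have rel: "real (card D) * (1 - z) * poly e z + 4 * z * poly et z = 0" for z
  proof -
    have a: "real (card D) * (1 - z) * Rf D ?n i z (1 - z) + 4 * z * Rf D ?n i (1 - z) (4 * z) = Gf D ?n (1 - z) z"
      using local_identity[OF F(1,2) i] by simp
    have b: "real (card D) * (1 - z) * Rf D ?n j z (1 - z) + 4 * z * Rf D ?n j (1 - z) (4 * z) = Gf D ?n (1 - z) z"
      using local_identity[OF F(1,2) j] by simp
    from a b show ?thesis unfolding e_def et_def Rf_split[OF F(3,4)]
      by (simp add: algebra_simps)
  qed
  have wS: "\<And>i c. c \<in> Sset D i \<Longrightarrow> wt ?n c \<ge> 2*m" using F(5) by (simp add: Sset_def)
  have d1: "[:0,1:] ^ (2*m) dvd e"
  proof -
    have "\<And>i. [:0,1:] ^ (2*m) dvd ep D ?n i"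
      unfolding ep_def by (intro dvd_sum) (simp add: monom_altdef le_imp_power_dvd wS)
    then show ?thesis unfolding e_def by (intro dvd_diff)
  qed
  have d2: "[:1,-1:] ^ (2*m) dvd et"
  proof -
    have "\<And>i. [:1,-1:] ^ (2*m) dvd etp D ?n i"
      unfolding etp_def by (intro dvd_sum dvd_mult2) (simp add: le_imp_power_dvd wS)
    then show ?thesis unfolding et_def by (intro dvd_diff)
  qed
  have ev: "poly e (-z) = poly e z" for z
  proof -
    have "\<And>i. poly (ep D ?n i) (-z) = poly (ep D ?n i) z"
      unfolding ep_def poly_sum poly_monom
      by (intro sum.cong refl) (use F(6) in \<open>auto simp: Sset_def\<close>)
    then show ?thesis unfolding e_def by simp
  qed
  have deg: "degree e \<le> 6*m - 1"
  proof -
    have "\<And>i. i < ?n \<Longrightarrow> degree (ep D ?n i) \<le> 6*m - 1"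
      unfolding ep_def
    proof (intro degree_sum_le finS)
      fix i p assume "i < ?n" "p \<in> Sset D i"
      then have "wt ?n p \<le> ?n - 1" by (intro wt_le_i[of i]) (auto simp: Sset_def)
      then show "degree (monom (1::real) (wt ?n p)) \<le> 6 * m - 1" by (simp add: degree_monom_eq)
    qed
    then show ?thesis unfolding e_def using i j by (intro degree_diff_le) auto
  qed
  have fx: "poly et (1/3) = 2 ^ (6*m-1) * poly e (1/3)"
  proof -
    have t: "(1 - 1/3) ^ w * (1 + 3 * (1/3)) ^ (?n - 1 - w) = (2::real) ^ (?n - 1) * (1/3) ^ w"
      if w: "w \<le> ?n - 1" for w
    proof -
      have "(2::real) ^ (?n - 1) = 2 ^ w * 2 ^ (?n - 1 - w)" using w by (simp flip: power_add)
      moreover have "(1 - 1/3::real) ^ w = 2 ^ w * (1/3) ^ w" by (simp flip: power_mult_distrib)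
      ultimately show ?thesis by simp
    qed
    have "\<And>i. i < ?n \<Longrightarrow> poly (etp D ?n i) (1/3) = 2 ^ (6*m-1) * poly (ep D ?n i) (1/3)"
      unfolding etp_def ep_def poly_sum sum_distrib_left
    proof (intro sum.cong refl)
      fix i x assume "i < ?n" "x \<in> Sset D i"
      then have w: "wt ?n x \<le> ?n - 1" by (intro wt_le_i[of i]) (auto simp: Sset_def)
      show "poly ([:1,-1:] ^ wt ?n x * [:1,3:] ^ (?n - 1 - wt ?n x)) (1/3::real) = 2 ^ (6*m-1) * poly (monom 1 (wt ?n x)) (1/3)"
        using t[OF w] by (simp add: poly_monom)
    qed
    then show ?thesis unfolding e_def et_def using i j by (simp add: algebra_simps)
  qed
  have "e = 0" using m by (intro poly_key[OF _ Kpos rel d1 d2 ev deg fx]) simp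
  then have "coeff e (2*m) = 0" by simp
  moreover have "\<And>i. coeff (ep D ?n i) (2*m) = real (card {c\<in>Sset D i. wt ?n c = 2*m})"
    unfolding ep_def coeff_sum coeff_monom using finS by (simp add: sum.If_cases[OF finS] Int_def conj_commute)
  ultimately show ?thesis unfolding e_def by simp
qed




lemma vscale_vscale: "vscale a (vscale b x) = vscale (f4_mul a b) x"
  by (rule ext) (simp add: vscale_def f4l_mul_assoc)

lemma wt_vscale: "a \<noteq> F0 \<Longrightarrow> wt n (vscale a x) = wt n x"
  by (simp add: wt_def vscale_def)

lemma card_scale:
  assumes lin: "linear_code n D" and a: "a \<noteq> F0" and b: "f4_mul b a = F1"
  shows "card {x\<in>D. wt n x = w \<and> x 0 = F1} = card {x\<in>D. wt n x = w \<and> x 0 = a}"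
proof -
  have ab: "f4_mul a b = F1" using b by (simp add: f4l_mul_comm)
  have b0: "b \<noteq> F0" using b by auto
  have "bij_betw (vscale a) {x\<in>D. wt n x = w \<and> x 0 = F1} {x\<in>D. wt n x = w \<and> x 0 = a}"
  proof (rule bij_betw_byWitness[where f'="vscale b"])
    show "\<forall>x\<in>{x\<in>D. wt n x = w \<and> x 0 = F1}. vscale b (vscale a x) = x"
      by (auto simp: vscale_vscale b) (auto simp: vscale_def)
    show "\<forall>y\<in>{x\<in>D. wt n x = w \<and> x 0 = a}. vscale a (vscale b y) = y"
      by (auto simp: vscale_vscale ab) (auto simp: vscale_def)
    show "vscale a ` {x\<in>D. wt n x = w \<and> x 0 = F1} \<subseteq> {x\<in>D. wt n x = w \<and> x 0 = a}"
      using lin a by (auto simp: linear_code_def wt_vscale) (simp add: vscale_def)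
    show "vscale b ` {x\<in>D. wt n x = w \<and> x 0 = a} \<subseteq> {x\<in>D. wt n x = w \<and> x 0 = F1}"
    proof
      fix y assume "y \<in> vscale b ` {x\<in>D. wt n x = w \<and> x 0 = a}"
      then obtain x where x: "x \<in> D" "wt n x = w" "x 0 = a" "y = vscale b x" by auto
      show "y \<in> {x\<in>D. wt n x = w \<and> x 0 = F1}"
        using lin x b0 b by (auto simp: linear_code_def wt_vscale[unfolded vscale_def] vscale_def)
    qed
  qed
  then show ?thesis by (rule bij_betw_same_card)
qed

lemma card_filter_sum: "finite S \<Longrightarrow> card {x\<in>S. P x} = (\<Sum>x\<in>S. if P x then 1 else (0::nat))"
  by (simp add: sum.inter_filter[symmetric])

theorem main:
  fixes m :: nat and D :: "(nat \<Rightarrow> f4) set"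
  assumes m: "m > 0" and ne: "near_extremal (6 * m) D"
  shows "card {x \<in> D. wt (6 * m) x = 2 * m} mod 9 = 0"
proof -
  let ?n = "6*m"
  note F = ne_facts[OF m ne]
  define A where "A = {x \<in> D. wt ?n x = 2 * m}"
  define V where "V i = {x\<in>A. x i \<noteq> F0}" for i
  have finA: "finite A" using F(4) by (simp add: A_def)
  have splitA: "card A = card {c\<in>Sset D i. wt ?n c = 2*m} + card (V i)" for i
  proof -
    have e0: "{x\<in>A. x i = F0} = {c\<in>Sset D i. wt ?n c = 2*m}"
      using m by (auto simp: A_def Sset_def)
    have e1: "{x\<in>A. x i = F0} \<union> V i = A" by (auto simp: V_def)
    have "card ({x\<in>A. x i = F0} \<union> V i) = card {x\<in>A. x i = F0} + card (V i)"
      using finA by (intro card_Un_disjoint) (auto simp: V_def)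
    then have "card A = card {x\<in>A. x i = F0} + card (V i)" by (simp only: e1)
    then show ?thesis by (simp only: e0)
  qed
  have Vc: "card (V i) = card (V 0)" if "i < ?n" for i
    using splitA[of i] splitA[of 0] weight_count_const[OF m ne that, of 0] m by simp
  have "(\<Sum>i\<in>{0..<?n}. card (V i)) = (\<Sum>x\<in>A. wt ?n x)"
  proof -
    have "(\<Sum>i\<in>{0..<?n}. card (V i)) = (\<Sum>i\<in>{0..<?n}. \<Sum>x\<in>A. if x i \<noteq> F0 then 1 else 0)"
      unfolding V_def using finA by (simp add: card_filter_sum)
    also have "\<dots> = (\<Sum>x\<in>A. \<Sum>i\<in>{0..<?n}. if x i \<noteq> F0 then 1 else 0)" by (rule sum.swap)
    also have "\<dots> = (\<Sum>x\<in>A. wt ?n x)"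
      unfolding wt_def by (rule sum.cong[OF refl]) (rule card_filter_sum[symmetric], simp)
    finally show ?thesis .
  qed
  also have "\<dots> = 2 * m * card A" by (simp add: A_def)
  finally have S: "(\<Sum>i\<in>{0..<?n}. card (V i)) = 2 * m * card A" .
  have "?n * card (V 0) = (\<Sum>i\<in>{0..<?n}. card (V 0))" by simp
  also have "\<dots> = (\<Sum>i\<in>{0..<?n}. card (V i))"
    by (rule sum.cong[OF refl]) (rule Vc[symmetric], simp)
  also have "\<dots> = 2 * m * card A" by (rule S)
  finally have "?n * card (V 0) = 2 * m * card A" .
  then have NA: "card A = 3 * card (V 0)" using m by simp
  define W where "W a = {x\<in>D. wt ?n x = 2*m \<and> x 0 = a}" for a
  have "V 0 = W F1 \<union> W FW \<union> W FW2"
    by (auto simp: V_def W_def A_def) (metis f4.exhaust)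
  moreover have "finite (W a)" for a using F(4) by (simp add: W_def)
  ultimately have "card (V 0) = card (W F1) + card (W FW) + card (W FW2)"
    by (simp add: card_Un_disjoint W_def Un_Int_distrib2 disjoint_iff) 
  moreover have "card (W FW) = card (W F1)" unfolding W_def
    by (rule card_scale[OF F(1), symmetric, of FW FW2]) simp_all
  moreover have "card (W FW2) = card (W F1)" unfolding W_def
    by (rule card_scale[OF F(1), symmetric, of FW2 FW]) simp_all
  ultimately have "card A = 9 * card (W F1)" using NA by simp
  then show ?thesis unfolding A_def by simp
qed


theorem lemma3p4:
  fixes m :: nat and D :: "(nat \<Rightarrow> f4) set"
  assumes "m > 0"
    and "near_extremal (6 * m) D"
  shows "card {x \<in> D. wt (6 * m) x = 2 * m} mod 9 = 0"
  using assms by (rule main)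

end
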